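(* Let $1<\alpha<2$, let $k_0\ge 3$ be an integer, and for $j\in\mathbb{Z}$ let $c_j=(-1)^j\Gamma(\alpha+1)/[\Gamma(\alpha/2-j+1)\Gamma(\alpha/2+j+1)]$. Then $$\frac{\left(1-\frac{1+\alpha}{5+\alpha/2}\right)^{5+\alpha/2}e^{\alpha+1}\Gamma(\alpha+1)\sin(\pi\alpha/2)}{\pi\alpha\,(k_0+1/2)^{\alpha}}<\sum_{j=k_0+1}^{\infty}|c_j|<\frac{\sqrt{2}\,e^{13/12}\,\Gamma(\alpha+1)\sin(\pi\alpha/2)}{\pi\alpha\,(k_0-1)^{\alpha}}.$$
   Context: $\Gamma$ denotes the Euler gamma function (with $1/\Gamma$ taken to be $0$ at poles). *)

theory Defs
  imports "HOL-Analysis.Analysis"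
begin

text \<open>Coefficients c_j = (-1)^j Gamma(alpha+1) / (Gamma(alpha/2-j+1) Gamma(alpha/2+j+1)),
  with 1/Gamma taken to be 0 at poles (rGamma is the reciprocal Gamma function).\<close>
definition frac_coeff :: "real \<Rightarrow> int \<Rightarrow> real" where
  "frac_coeff \<alpha> j = (-1) powi j * Gamma (\<alpha> + 1)
      * rGamma (\<alpha>/2 - of_int j + 1) * rGamma (\<alpha>/2 + of_int j + 1)"

end

theory Submission imports Defs "HOL-Real_Asymp.Real_Asymp" begin

lemma Gp1: "(y::real) > 0 \<Longrightarrow> Gamma (y + 1) = y * Gamma y"
  by (rule Gamma_plus1) (auto elim!: nonpos_Ints_cases)

lemma wendel:
  fixes y s :: real assumes y: "y > 0" and s: "0 \<le> s" "s \<le> 1"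
  shows "Gamma (y + s) \<le> y powr s * Gamma y"
proof -
  have "(ln \<circ> Gamma) ((1 - s) * y + s * (y + 1)) \<le> (1 - s) * (ln \<circ> Gamma) y + s * (ln \<circ> Gamma) (y + 1)"
    using y s convex_onD[OF log_convex_Gamma_real, of s y "y+1"] by auto
  hence "ln (Gamma (y + s)) \<le> (1 - s) * ln (Gamma y) + s * ln (y * Gamma y)"
    using y Gp1[OF y] by (simp add: algebra_simps)
  also have "\<dots> = ln (Gamma y) + s * ln y" 
  proof -
    have "Gamma y \<noteq> 0" using Gamma_real_pos[OF y] by linarith
    hence "ln (y * Gamma y) = ln y + ln (Gamma y)" using y by (simp add: ln_mult)
    thus ?thesis by (simp add: algebra_simps)
  qed
  finally have "exp (ln (Gamma (y + s))) \<le> exp (ln (Gamma y) + s * ln y)" by simp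
  thus ?thesis using y s Gamma_real_pos[OF y] by (simp add: exp_add powr_def mult.commute)
qed

lemma gbounds:
  fixes x a :: real assumes x: "x > 0" and a: "1 \<le> a" "a \<le> 2"
  shows "x powr a * Gamma x \<le> Gamma (x + a)" "Gamma (x + a) \<le> (x + a - 1) powr a * Gamma x"
proof -
  define s where "s = a - 1"
  have s: "0 \<le> s" "s \<le> 1" using a by (auto simp: s_def)
  have xs: "x + s > 0" using x s by auto
  have eq: "Gamma (x + a) = (x + s) * Gamma (x + s)"
    using Gp1[OF xs] by (simp add: s_def algebra_simps)
  have G: "Gamma x > 0" "Gamma (x+s) > 0" using x xs by auto
  have w1: "Gamma (x + s) \<le> x powr s * Gamma x" using wendel[OF x s] .
  have "Gamma ((x + s) + (1 - s)) \<le> (x + s) powr (1 - s) * Gamma (x + s)"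
    using wendel[OF xs, of "1 - s"] s by auto
  hence w2: "x * Gamma x \<le> (x + s) powr (1 - s) * Gamma (x + s)" using Gp1[OF x] by simp
  have "x powr a * Gamma x = x powr s * (x * Gamma x)"
    using x by (simp add: s_def powr_diff)
  also have "\<dots> \<le> (x + s) powr s * (x * Gamma x)"
    using x s G by (intro mult_right_mono powr_mono2) auto
  also have "\<dots> \<le> (x + s) powr s * ((x + s) powr (1 - s) * Gamma (x + s))"
    using w2 by (intro mult_left_mono) auto
  also have "\<dots> = (x + s) * Gamma (x + s)"
    using xs by (simp add: powr_add[symmetric] mult.assoc[symmetric])
  finally show "x powr a * Gamma x \<le> Gamma (x + a)" using eq by simp
  have "Gamma (x + a) \<le> (x + s) * (x powr s * Gamma x)" using eq w1 xs by (simp add: mult_left_mono)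
  also have "\<dots> \<le> (x + s) * ((x + s) powr s * Gamma x)"
    using x s G xs by (intro mult_left_mono mult_right_mono powr_mono2) auto
  also have "\<dots> = (x + a - 1) powr a * Gamma x"
    using xs by (simp add: s_def powr_diff field_simps)
  finally show "Gamma (x + a) \<le> (x + a - 1) powr a * Gamma x" .
qed


lemma rGamma_reflection_real: "rGamma (x::real) * rGamma (1 - x) = sin (pi * x) / pi"
proof -
  have "complex_of_real (rGamma x * rGamma (1 - x)) = complex_of_real (sin (pi * x) / pi)"
    using rGamma_reflection_complex[of "complex_of_real x"]
    by (simp add: rGamma_complex_of_real[symmetric] sin_of_real[symmetric])
  thus ?thesis by (simp only: of_real_eq_iff)
qed

lemma abs_sin_shift: "\<bar>sin (pi * (b - real j + 1))\<bar> = \<bar>sin (pi * b)\<bar>"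
proof -
  have "pi * (b - real j + 1) = (pi * b + pi) - real j * pi" by (simp add: algebra_simps)
  hence "sin (pi * (b - real j + 1)) = sin (pi * b + pi) * (- 1) ^ j"
    by (simp add: sin_diff)
  thus ?thesis by (simp add: abs_mult)
qed

lemma coeff_abs:
  fixes \<alpha> :: real and j :: nat
  assumes "1 < \<alpha>" "\<alpha> < 2" "j \<ge> 2"
  shows "\<bar>frac_coeff \<alpha> (int j)\<bar> = Gamma (\<alpha> + 1) * sin (pi * \<alpha> / 2) / pi
           * (Gamma (real j - \<alpha>/2) / Gamma (real j + 1 + \<alpha>/2))"
proof -
  define b where "b = \<alpha>/2"
  have b: "1/2 < b" "b < 1" using assms by (auto simp: b_def)
  have jb: "real j - b > 0" using assms b by auto
  have refl: "rGamma (b - real j + 1) * rGamma (real j - b) = sin (pi * (b - real j + 1)) / pi"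
    using rGamma_reflection_real[of "b - real j + 1"] by simp
  have r1: "rGamma (real j - b) = 1 / Gamma (real j - b)" by (simp add: rGamma_inverse_Gamma field_simps)
  have G1: "Gamma (real j - b) > 0" using jb by simp
  have r2: "rGamma (b + real j + 1) = 1 / Gamma (real j + 1 + b)" by (simp add: rGamma_inverse_Gamma field_simps add_ac)
  have G2: "Gamma (real j + 1 + b) > 0" using b by simp
  have rz: "rGamma (b - real j + 1) = sin (pi * (b - real j + 1)) / pi * Gamma (real j - b)"
    using refl r1 G1 by (simp add: field_simps)
  have sb: "sin (pi * b) > 0" using b by (intro sin_gt_zero) auto
  have Ga: "Gamma (\<alpha> + 1) > 0" using assms by simp
  have pw: "\<bar>(-1::real) powi int j\<bar> = 1" by (simp add: power_int_def)
  have "\<bar>frac_coeff \<alpha> (int j)\<bar> = Gamma (\<alpha> + 1) * \<bar>sin (pi * (b - real j + 1))\<bar> / pi * Gamma (real j - b)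
           / Gamma (real j + 1 + b)"
    unfolding frac_coeff_def b_def[symmetric] using pw Ga G1 G2
    by (simp add: rz r2 abs_mult)
  also have "\<dots> = Gamma (\<alpha> + 1) * sin (pi * b) / pi * (Gamma (real j - b) / Gamma (real j + 1 + b))"
    using abs_sin_shift[of b j] sb by simp
  finally show ?thesis by (simp add: b_def)
qed


lemma ln_1m: assumes "0 \<le> (v::real)" "v < 1" shows "ln (1 - v) \<le> - v - v^2/2"
proof -
  let ?f = "\<lambda>x::real. - x - x^2/2 - ln (1 - x)"
  have "?f 0 \<le> ?f v"
  proof (rule DERIV_nonneg_imp_nondecreasing[OF assms(1)])
    fix x assume x: "0 \<le> x" "x \<le> v"
    hence x1: "x < 1" using assms by auto
    have "DERIV ?f x :> (- 1 - x - (- 1) / (1 - x))"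
      using x1 by (auto intro!: derivative_eq_intros simp: power2_eq_square)
    moreover have "- 1 - x - (- 1) / (1 - x) = x^2 / (1 - x)"
      using x1 by (simp add: field_simps power2_eq_square)
    moreover have "x^2 / (1 - x) \<ge> 0" using x1 by simp
    ultimately show "\<exists>y. DERIV ?f x :> y \<and> y \<ge> 0" by auto
  qed
  thus ?thesis by simp
qed

lemma Cbound: fixes \<alpha> :: real assumes "1 < \<alpha>" "\<alpha> < 2"
  shows "(1 - (1 + \<alpha>) / (5 + \<alpha>/2)) powr (5 + \<alpha>/2) * exp (\<alpha> + 1) \<le> exp (-1/3)"
proof -
  define t where "t = 5 + \<alpha>/2"
  define v where "v = (1 + \<alpha>) / t"
  have t: "t > 0" "t < 6" using assms by (auto simp: t_def)
  have v: "0 \<le> v" "v < 1" using assms t by (auto simp: v_def t_def field_simps)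
  have tv: "t * v = 1 + \<alpha>" using t by (simp add: v_def)
  have "(1 - v) powr t = exp (t * ln (1 - v))" using v by (simp add: powr_def)
  also have "\<dots> \<le> exp (t * (- v - v^2/2))"
    using ln_1m[OF v] t by simp
  finally have "(1 - v) powr t * exp (\<alpha> + 1) \<le> exp (t * (- v - v^2/2)) * exp (\<alpha> + 1)" by simp
  also have "\<dots> = exp (-(((t * v)^2) / (2 * t)))"
  proof -
    have e1: "t * (- v - v^2/2) + (\<alpha> + 1) = - (t * v^2 / 2)" using tv by (simp add: algebra_simps)
    have e2: "((t * v)^2) / (2 * t) = t * v^2 / 2" using t by (simp add: power2_eq_square field_simps)
    show ?thesis by (simp only: exp_add[symmetric] e1 e2)
  qed
  also have "\<dots> \<le> exp (-1/3)"
  proof -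
    have "(t * v)^2 \<ge> 4" unfolding tv
      using power_mono[of 2 "1 + \<alpha>" 2] assms by simp
    hence "(t * v)^2 / (2*t) \<ge> 4 / 12"
      using t by (simp add: field_simps)
    thus ?thesis by simp
  qed
  finally show ?thesis by (simp add: t_def v_def)
qed


lemma Abound:
  fixes \<alpha> j :: real assumes "1 < \<alpha>" "\<alpha> < 2" "j \<ge> 1"
  shows "1 / (j + \<alpha>/2 - 1) powr \<alpha> \<le> Gamma (j - \<alpha>/2) / Gamma (j + \<alpha>/2)"
        "Gamma (j - \<alpha>/2) / Gamma (j + \<alpha>/2) \<le> 1 / (j - \<alpha>/2) powr \<alpha>"
proof -
  define x where "x = j - \<alpha>/2"
  have x: "x > 0" using assms by (simp add: x_def)
  have e: "j + \<alpha>/2 = x + \<alpha>" by (simp add: x_def)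
  have e2: "j + \<alpha>/2 - 1 = x + \<alpha> - 1" by (simp add: x_def)
  have G: "Gamma x > 0" "Gamma (x + \<alpha>) > 0" using x assms by auto
  have b1: "x powr \<alpha> * Gamma x \<le> Gamma (x + \<alpha>)" "Gamma (x + \<alpha>) \<le> (x + \<alpha> - 1) powr \<alpha> * Gamma x"
    using gbounds[OF x, of \<alpha>] assms by auto
  have p1: "x powr \<alpha> > 0" "(x + \<alpha> - 1) powr \<alpha> > 0" using x assms by auto
  show "1 / (j + \<alpha>/2 - 1) powr \<alpha> \<le> Gamma (j - \<alpha>/2) / Gamma (j + \<alpha>/2)"
    unfolding e e2 x_def[symmetric] using b1 G p1 by (simp add: field_simps)
  show "Gamma (j - \<alpha>/2) / Gamma (j + \<alpha>/2) \<le> 1 / (j - \<alpha>/2) powr \<alpha>"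
    unfolding e x_def[symmetric] using b1 G p1 by (simp add: field_simps)
qed

lemma Adiff:
  fixes \<alpha> j :: real assumes "1 < \<alpha>" "\<alpha> < 2" "j \<ge> 1"
  shows "Gamma (j - \<alpha>/2) / Gamma (j + 1 + \<alpha>/2)
     = (Gamma (j - \<alpha>/2) / Gamma (j + \<alpha>/2) - Gamma ((j + 1) - \<alpha>/2) / Gamma ((j + 1) + \<alpha>/2)) / \<alpha>"
proof -
  have x: "j - \<alpha>/2 > 0" "j + \<alpha>/2 > 0" using assms by auto
  have g1: "Gamma ((j + 1) - \<alpha>/2) = (j - \<alpha>/2) * Gamma (j - \<alpha>/2)"
    using Gp1[OF x(1)] by (simp add: algebra_simps)
  have g2: "Gamma (j + 1 + \<alpha>/2) = (j + \<alpha>/2) * Gamma (j + \<alpha>/2)"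
    using Gp1[OF x(2)] by (simp add: algebra_simps)
  have G: "Gamma (j - \<alpha>/2) > 0" "Gamma (j + \<alpha>/2) > 0" using x by auto
  define P where "P = Gamma (j - \<alpha>/2)"
  define Q where "Q = Gamma (j + \<alpha>/2)"
  define u where "u = j - \<alpha>/2"
  define w where "w = j + \<alpha>/2"
  have wu: "\<alpha> = w - u" by (simp add: u_def w_def)
  have "P / (w * Q) = (P / Q - u * P / (w * Q)) / (w - u)"
  proof -
    have "P > 0" "Q > 0" "w > 0" "w - u > 0" using G x assms by (auto simp: P_def Q_def u_def w_def)
    thus ?thesis by (simp add: field_simps)
  qed
  moreover have "Gamma (j - \<alpha>/2) / Gamma (j + 1 + \<alpha>/2) = P / (w * Q)"
    by (simp add: g2 P_def Q_def w_def)
  moreover have "Gamma ((j + 1) - \<alpha>/2) / Gamma ((j + 1) + \<alpha>/2) = u * P / (w * Q)"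
    using g1 g2 by (simp add: P_def Q_def w_def u_def)
  moreover have "Gamma (j - \<alpha>/2) / Gamma (j + \<alpha>/2) = P / Q" by (simp add: P_def Q_def)
  ultimately show ?thesis using wu by metis
qed


theorem lemma1:
  fixes \<alpha> :: real and k0 :: nat
  assumes "1 < \<alpha>" "\<alpha> < 2" "k0 \<ge> 3"
  shows "summable (\<lambda>n. \<bar>frac_coeff \<alpha> (int (n + k0 + 1))\<bar>)
    \<and> (1 - (1 + \<alpha>) / (5 + \<alpha>/2)) powr (5 + \<alpha>/2) * exp (\<alpha> + 1) * Gamma (\<alpha> + 1)
        * sin (pi * \<alpha> / 2) / (pi * \<alpha> * (real k0 + 1/2) powr \<alpha>)
      < (\<Sum>n. \<bar>frac_coeff \<alpha> (int (n + k0 + 1))\<bar>)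
    \<and> (\<Sum>n. \<bar>frac_coeff \<alpha> (int (n + k0 + 1))\<bar>)
      < sqrt 2 * exp (13/12) * Gamma (\<alpha> + 1) * sin (pi * \<alpha> / 2)
        / (pi * \<alpha> * (real k0 - 1) powr \<alpha>)"
proof -
  define K where "K = Gamma (\<alpha> + 1) * sin (pi * \<alpha> / 2) / pi"
  define A where "A = (\<lambda>j::real. Gamma (j - \<alpha>/2) / Gamma (j + \<alpha>/2))"
  define g where "g = (\<lambda>n::nat. A (real (n + k0 + 1)))"
  define C where "C = (1 - (1 + \<alpha>) / (5 + \<alpha>/2)) powr (5 + \<alpha>/2) * exp (\<alpha> + 1)"
  have sinpos: "sin (pi * \<alpha> / 2) > 0" using assms by (intro sin_gt_zero) auto
  have Kpos: "K > 0" unfolding K_def using sinpos assms by simp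
  have f_eq: "\<bar>frac_coeff \<alpha> (int (n + k0 + 1))\<bar> = K / \<alpha> * (g n - g (Suc n))" for n
  proof -
    have "\<bar>frac_coeff \<alpha> (int (n + k0 + 1))\<bar> = K * (Gamma (real (n + k0 + 1) - \<alpha>/2) / Gamma (real (n + k0 + 1) + 1 + \<alpha>/2))"
      using coeff_abs[of \<alpha> "n + k0 + 1"] assms by (simp add: K_def)
    also have "\<dots> = K * ((g n - g (Suc n)) / \<alpha>)"
      using Adiff[of \<alpha> "real (n + k0 + 1)"] assms by (simp add: g_def A_def add_ac)
    finally show ?thesis by simp
  qed
  have gb: "1 / (real (n + k0 + 1) + \<alpha>/2 - 1) powr \<alpha> \<le> g n" "g n \<le> 1 / (real (n + k0 + 1) - \<alpha>/2) powr \<alpha>" for n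
    using Abound[of \<alpha> "real (n + k0 + 1)"] assms by (auto simp: g_def A_def)
  have glim: "g \<longlonglongrightarrow> 0"
  proof (rule tendsto_sandwich[of "\<lambda>_. 0" _ _ "\<lambda>n. 1 / (real n + (real k0 + 1 - \<alpha>/2))"])
    show "\<forall>\<^sub>F n in sequentially. 0 \<le> g n"
      using gb(1) by (intro always_eventually allI order_trans[OF _ gb(1)]) simp
    show "\<forall>\<^sub>F n in sequentially. g n \<le> 1 / (real n + (real k0 + 1 - \<alpha>/2))"
    proof (intro always_eventually allI)
      fix n
      define y where "y = real n + (real k0 + 1 - \<alpha>/2)"
      have y: "y \<ge> 1" using assms by (simp add: y_def)
      have "y powr 1 \<le> y powr \<alpha>" using y assms by (intro powr_mono) auto
      hence "1 / y powr \<alpha> \<le> 1 / y" using y by (intro divide_left_mono) auto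
      moreover have "g n \<le> 1 / y powr \<alpha>" using gb(2)[of n] by (simp add: y_def algebra_simps)
      ultimately show "g n \<le> 1 / (real n + (real k0 + 1 - \<alpha>/2))" by (simp add: y_def)
    qed
    have "real k0 + 1 - \<alpha>/2 > 0" using assms by simp
    thus "(\<lambda>n. 1 / (real n + (real k0 + 1 - \<alpha>/2))) \<longlonglongrightarrow> 0" by real_asymp
  qed simp
  have sums: "(\<lambda>n. \<bar>frac_coeff \<alpha> (int (n + k0 + 1))\<bar>) sums (K / \<alpha> * g 0)"
    unfolding f_eq using sums_mult[OF telescope_sums'[OF glim], of "K/\<alpha>"] by simp
  have S: "(\<Sum>n. \<bar>frac_coeff \<alpha> (int (n + k0 + 1))\<bar>) = K / \<alpha> * g 0" using sums by (rule sums_unique[symmetric])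
  have Ka: "K / \<alpha> > 0" using Kpos assms by simp
  define N where "N = real k0 + 1"
  have N: "N \<ge> 4" using assms by (simp add: N_def)
  have g0: "1 / (N + \<alpha>/2 - 1) powr \<alpha> \<le> g 0" "g 0 \<le> 1 / (N - \<alpha>/2) powr \<alpha>"
    using gb[of 0] by (simp_all add: N_def add_ac)
  have up: "K / \<alpha> * g 0 < sqrt 2 * exp (13/12) * Gamma (\<alpha> + 1) * sin (pi * \<alpha> / 2) / (pi * \<alpha> * (real k0 - 1) powr \<alpha>)"
  proof -
    have p: "(real k0 - 1) powr \<alpha> > 0" using assms by simp
    have "(real k0 - 1) powr \<alpha> < (N - \<alpha>/2) powr \<alpha>"
      using assms by (intro powr_less_mono2) (auto simp: N_def)
    moreover have p2: "(N - \<alpha>/2) powr \<alpha> > 0" using assms by (simp add: N_def)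
    ultimately have "1 / (N - \<alpha>/2) powr \<alpha> < 1 / (real k0 - 1) powr \<alpha>" using p
      by (intro divide_strict_left_mono) (auto intro: mult_pos_pos)
    hence "g 0 < 1 / (real k0 - 1) powr \<alpha>" using g0(2) by linarith
    hence "K / \<alpha> * g 0 < K / \<alpha> * (1 / (real k0 - 1) powr \<alpha>)"
      using Ka by (rule mult_strict_left_mono)
    also have "\<dots> \<le> (sqrt 2 * exp (13/12)) * (K / \<alpha> * (1 / (real k0 - 1) powr \<alpha>))"
    proof -
      have "sqrt 2 \<ge> 1" by simp
      moreover have "exp (13/12::real) \<ge> 1" by simp
      ultimately have "sqrt 2 * exp (13/12::real) \<ge> 1" by (metis mult_mono' one_le_numeral order_trans mult_1_left order.refl zero_le_one)
      moreover have "K / \<alpha> * (1 / (real k0 - 1) powr \<alpha>) > 0" using Ka p by (intro mult_pos_pos) auto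
      ultimately show ?thesis using mult_right_mono[of 1 "sqrt 2 * exp (13/12)" "K / \<alpha> * (1 / (real k0 - 1) powr \<alpha>)"]
        by simp
    qed
    also have "\<dots> = sqrt 2 * exp (13/12) * Gamma (\<alpha> + 1) * sin (pi * \<alpha> / 2) / (pi * \<alpha> * (real k0 - 1) powr \<alpha>)"
      by (simp add: K_def field_simps)
    finally show ?thesis .
  qed
  have low: "C * Gamma (\<alpha> + 1) * sin (pi * \<alpha> / 2) / (pi * \<alpha> * (real k0 + 1/2) powr \<alpha>) < K / \<alpha> * g 0"
  proof -
    have Cb: "C \<le> exp (-1/3)" unfolding C_def using Cbound assms by simp
    have "exp (1/3::real) \<ge> 1 + 1/3" by (rule exp_ge_add_one_self)
    hence "exp (-1/3::real) \<le> 3/4" by (simp add: exp_minus field_simps)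
    hence C1: "C < 49/64" using Cb by linarith
    define q where "q = (real k0 + 1/2) / N"
    have q: "q > 0" "q \<le> 1" "q \<ge> 7/8" using N by (auto simp: q_def N_def field_simps)
    have "q powr 2 \<le> q powr \<alpha>" using q assms by (intro powr_mono') auto
    moreover have "q powr 2 = q^2" using q by (simp add: powr_realpow)
    moreover have "(7/8::real)^2 \<le> q^2" using q by (intro power_mono) auto
    ultimately have "C < q powr \<alpha>" using C1 by (simp add: power2_eq_square)
    hence "C < (real k0 + 1/2) powr \<alpha> / N powr \<alpha>" by (simp add: q_def powr_divide)
    moreover have pN: "N powr \<alpha> > 0" "(real k0 + 1/2) powr \<alpha> > 0" using N by auto
    ultimately have "C / (real k0 + 1/2) powr \<alpha> < 1 / N powr \<alpha>" by (simp add: field_simps)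
    also have "1 / N powr \<alpha> \<le> 1 / (N + \<alpha>/2 - 1) powr \<alpha>"
    proof -
      have "(N + \<alpha>/2 - 1) powr \<alpha> \<le> N powr \<alpha>" using assms N by (intro powr_mono2) auto
      moreover have "(N + \<alpha>/2 - 1) powr \<alpha> > 0" using assms N by simp
      ultimately show ?thesis using pN by (intro divide_left_mono) (auto intro: mult_pos_pos)
    qed
    also have "\<dots> \<le> g 0" by (rule g0(1))
    finally have "K / \<alpha> * (C / (real k0 + 1/2) powr \<alpha>) < K / \<alpha> * g 0"
      using Ka by (rule mult_strict_left_mono)
    moreover have "K / \<alpha> * (C / (real k0 + 1/2) powr \<alpha>) = C * Gamma (\<alpha> + 1) * sin (pi * \<alpha> / 2) / (pi * \<alpha> * (real k0 + 1/2) powr \<alpha>)"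
      by (simp add: K_def field_simps)
    ultimately show ?thesis by simp
  qed
  show ?thesis using sums_summable[OF sums] S up low by (simp add: C_def)
qed

end
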